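(* Let $\mathcal{H}$ be a hedgehog with support function $h$ and let $k>2$ be an integer. Then the $k$th Order Midpoint Set of $\mathcal{H}$ is parameterized by \[ \Omega_{\mathcal{H},k}(s)=\frac{2}{k}\sum_{j=1}^{k}h\Big(s+\frac{2\pi j}{k}\Big)\Big(\cos\Big(s+\frac{2\pi j}{k}\Big),\sin\Big(s+\frac{2\pi j}{k}\Big)\Big),\qquad s\in\Big[0,\frac{2\pi}{k}\Big]; \] that is, for every $s$, the center of mass of the equiangular $k$-gon circumscribed about $\mathcal{H}$ at parameter $s$ equals the right-hand side.
   Context: Write $u(s)=(\cos s,\sin s)$, $u'(s)=(-\sin s,\cos s)$. A hedgehog is a closed planar curve determined by a smooth $2\pi$-periodic function $h$ (its support function) via $\mathcal{H}(s)=h(s)u(s)+h'(s)u'(s)$. For $s\in\mathbb{R}$ and $j\in\mathbb{Z}$ let $\ell_j(s)=\{x:\langle x,u(s+\tfrac{2\pi j}{k})\rangle=h(s+\tfrac{2\pi j}{k})\}$ (support lines). The equiangular $k$-gon circumscribed about $\mathcal{H}$ at parameter $s$ has vertices $v_j(s)=\ell_j(s)\cap\ell_{j+1}(s)$, $j=0,\dots,k-1$ (indices mod $k$), and its center of mass is $\frac1k\sum_{j=0}^{k-1}v_j(s)$. The $k$th Order Midpoint Set $\Omega_{\mathcal{H},k}$ is the set of centers of mass of all these equiangular circumscribed $k$-gons. *)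

theory Defs
  imports "HOL-Analysis.Analysis"
begin

definition uvec :: "real \<Rightarrow> real \<times> real" where
  "uvec s = (cos s, sin s)"

definition uvec' :: "real \<Rightarrow> real \<times> real" where
  "uvec' s = (- sin s, cos s)"

definition smooth_fun :: "(real \<Rightarrow> real) \<Rightarrow> bool" where
  "smooth_fun h \<longleftrightarrow> (\<forall>n x. ((deriv ^^ n) h) differentiable (at x))"

definition is_support_function :: "(real \<Rightarrow> real) \<Rightarrow> bool" where
  "is_support_function h \<longleftrightarrow> smooth_fun h \<and> (\<forall>s. h (s + 2 * pi) = h s)"

definition hedgehog :: "(real \<Rightarrow> real) \<Rightarrow> real \<Rightarrow> real \<times> real" where
  "hedgehog h s = h s *\<^sub>R uvec s + deriv h s *\<^sub>R uvec' s"

definition support_line :: "(real \<Rightarrow> real) \<Rightarrow> nat \<Rightarrow> real \<Rightarrow> int \<Rightarrow> (real \<times> real) set" where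
  "support_line h k s j = {x. inner x (uvec (s + 2 * pi * of_int j / real k)) = h (s + 2 * pi * of_int j / real k)}"

definition gon_vertex :: "(real \<Rightarrow> real) \<Rightarrow> nat \<Rightarrow> real \<Rightarrow> int \<Rightarrow> real \<times> real" where
  "gon_vertex h k s j = (THE x. x \<in> support_line h k s j \<inter> support_line h k s (j + 1))"

definition gon_center :: "(real \<Rightarrow> real) \<Rightarrow> nat \<Rightarrow> real \<Rightarrow> real \<times> real" where
  "gon_center h k s = (1 / real k) *\<^sub>R (\<Sum>j<k. gon_vertex h k s (int j))"

definition midpoint_set :: "(real \<Rightarrow> real) \<Rightarrow> nat \<Rightarrow> (real \<times> real) set" where
  "midpoint_set h k = range (gon_center h k)"

end

theory Submission
  imports Defs
begin

lemma shift_sum: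
  fixes F :: "nat \<Rightarrow> 'a::ab_group_add"
  assumes "F k = F 0"
  shows "(\<Sum>j<k. F (Suc j)) = (\<Sum>j<k. F j)"
proof -
  have "(\<Sum>j<Suc k. F j) = F 0 + (\<Sum>j<k. F (Suc j))" by (rule sum.lessThan_Suc_shift)
  moreover have "(\<Sum>j<Suc k. F j) = (\<Sum>j<k. F j) + F k" by simp
  ultimately show ?thesis using assms by (simp add: add.commute)
qed

lemma trig_aux[simp]:
  fixes x t :: real
  shows "x * (cos t * cos t) + x * (sin t * sin t) = x"
    "x * (sin t * sin t) + x * (cos t * cos t) = x"
proof -
  have "x * (cos t * cos t) + x * (sin t * sin t) = x * (cos t ^ 2 + sin t ^ 2)"
    by (simp only: power2_eq_square distrib_left)
  thus "x * (cos t * cos t) + x * (sin t * sin t) = x" by simp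
  thus "x * (sin t * sin t) + x * (cos t * cos t) = x" by (simp add: add.commute)
qed

lemma vertex_formula:
  fixes th a c b :: real and x :: "real \<times> real"
  assumes sa: "sin a \<noteq> 0"
  shows "(inner x (uvec th) = p \<and> inner x (uvec (th + a)) = q) \<longleftrightarrow>
    x = p *\<^sub>R uvec th + ((q - p * cos a) / sin a) *\<^sub>R uvec' th"
proof
  assume H: "inner x (uvec th) = p \<and> inner x (uvec (th + a)) = q"
  obtain x1 x2 where xx: "x = (x1, x2)" by (cases x)
  have e1: "x1 * cos th + x2 * sin th = p" using H xx by (simp add: uvec_def inner_prod_def)
  have e2: "x1 * (cos th * cos a - sin th * sin a) + x2 * (sin th * cos a + cos th * sin a) = q"
    using H xx by (simp add: uvec_def inner_prod_def cos_add sin_add)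
  define c where "c = - x1 * sin th + x2 * cos th"
  have "q = cos a * (x1 * cos th + x2 * sin th) + c * sin a"
    unfolding e2[symmetric] c_def by (simp add: algebra_simps)
  hence qc: "q = p * cos a + c * sin a" using e1 by (simp add: mult.commute)
  hence cc: "c = (q - p * cos a) / sin a" using sa by (simp add: field_simps)
  have "p * cos th - c * sin th = x1 * (sin th ^ 2 + cos th ^ 2)"
    unfolding e1[symmetric] c_def by (simp add: algebra_simps power2_eq_square)
  hence s1: "x1 = p * cos th - c * sin th" by simp
  have "p * sin th + c * cos th = x2 * (sin th ^ 2 + cos th ^ 2)"
    unfolding e1[symmetric] c_def by (simp add: algebra_simps power2_eq_square)
  hence s2: "x2 = p * sin th + c * cos th" by simp
  show "x = p *\<^sub>R uvec th + ((q - p * cos a) / sin a) *\<^sub>R uvec' th"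
  proof -
    have "x = p *\<^sub>R uvec th + c *\<^sub>R uvec' th" using s1 s2 xx by (simp add: uvec_def uvec'_def)
    thus ?thesis using cc by simp
  qed
next
  assume H: "x = p *\<^sub>R uvec th + ((q - p * cos a) / sin a) *\<^sub>R uvec' th"
  define c where "c = (q - p * cos a) / sin a"
  have 1: "inner x (uvec th) = p * (sin th ^ 2 + cos th ^ 2)"
    using H unfolding c_def[symmetric] by (simp add: uvec_def uvec'_def inner_prod_def algebra_simps power2_eq_square)
  have "inner x (uvec (th + a)) = (p * cos a) * (cos th * cos th) + (p * cos a) * (sin th * sin th)
      + ((c * sin a) * (cos th * cos th) + (c * sin a) * (sin th * sin th))"
    using H unfolding c_def[symmetric] by (simp add: uvec_def uvec'_def inner_prod_def cos_add sin_add algebra_simps)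
  also have "\<dots> = p * cos a + c * sin a" by (simp only: trig_aux)
  also have "\<dots> = p * cos a + ((q - p * cos a) / sin a) * sin a" by (simp add: c_def)
  also have "\<dots> = q" using sa by simp
  finally show "inner x (uvec th) = p \<and> inner x (uvec (th + a)) = q" using 1 by simp
qed


lemma uvec'_shift: "uvec' (u - a) = cos a *\<^sub>R uvec' u + sin a *\<^sub>R uvec u"
  by (simp add: uvec_def uvec'_def sin_diff cos_diff algebra_simps)

lemma sin_alpha:
  assumes "k > (2::nat)"
  shows "sin (2 * pi / real k) \<noteq> 0"
proof -
  have "0 < 2 * pi / real k" using assms by simp
  moreover have "2 * pi / real k < pi" using assms pi_gt_zero by (simp add: field_simps)
  ultimately show ?thesis using sin_gt_zero by force
qed

lemma center_formula:
  fixes h :: "real \<Rightarrow> real" and k :: nat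
  assumes per: "\<forall>s. h (s + 2 * pi) = h s" and k: "k > 2"
  shows "gon_center h k s = (2 / real k) *\<^sub>R
      (\<Sum>j=1..k. h (s + 2 * pi * real j / real k) *\<^sub>R uvec (s + 2 * pi * real j / real k))"
proof -
  define \<alpha> where "\<alpha> = 2 * pi / real k"
  have sa: "sin \<alpha> \<noteq> 0" unfolding \<alpha>_def using sin_alpha[OF k] .
  define th where "th j = s + 2 * pi * real j / real k" for j :: nat
  define F where "F j = h (th j) *\<^sub>R uvec (th j)" for j
  define G where "G j = h (th j) *\<^sub>R uvec' (th j)" for j
  have thS: "th (Suc j) = th j + \<alpha>" for j
    by (simp add: th_def \<alpha>_def add_divide_distrib distrib_left)
  have thk: "th k = s + 2 * pi" using k by (simp add: th_def)
  have Fk: "F k = F 0" using per thk by (simp add: F_def th_def uvec_def)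
  have Gk: "G k = G 0" using per thk by (simp add: G_def th_def uvec'_def)
  have vert: "gon_vertex h k s (int j) = F j + ((h (th (Suc j)) - h (th j) * cos \<alpha>) / sin \<alpha>) *\<^sub>R uvec' (th j)" for j
  proof -
    have e: "s + 2 * pi * of_int (int j + 1) / real k = th j + \<alpha>"
      by (simp add: th_def \<alpha>_def add_divide_distrib distrib_left)
    have e0: "s + 2 * pi * of_int (int j) / real k = th j" by (simp add: th_def)
    show ?thesis
      unfolding gon_vertex_def support_line_def e e0 F_def thS
      apply (rule the_equality)
      using vertex_formula[OF sa] by auto
  qed
  have key: "h (th (Suc j)) *\<^sub>R uvec' (th j) = cos \<alpha> *\<^sub>R G (Suc j) + sin \<alpha> *\<^sub>R F (Suc j)" for j
    using uvec'_shift[of "th (Suc j)" \<alpha>] by (simp add: thS F_def G_def scaleR_add_right mult.commute)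
  have vert2: "gon_vertex h k s (int j) = F j + F (Suc j) + (cos \<alpha> / sin \<alpha>) *\<^sub>R (G (Suc j) - G j)" for j
  proof -
    have "gon_vertex h k s (int j) = F j + (1 / sin \<alpha>) *\<^sub>R (h (th (Suc j)) *\<^sub>R uvec' (th j) - cos \<alpha> *\<^sub>R G j)"
      unfolding vert G_def by (simp add: diff_divide_distrib scaleR_diff_left scaleR_diff_right)
    also have "\<dots> = F j + (1 / sin \<alpha>) *\<^sub>R (cos \<alpha> *\<^sub>R G (Suc j) + sin \<alpha> *\<^sub>R F (Suc j) - cos \<alpha> *\<^sub>R G j)"
      unfolding key ..
    also have "\<dots> = F j + F (Suc j) + (cos \<alpha> / sin \<alpha>) *\<^sub>R (G (Suc j) - G j)"
      using sa by (simp add: scaleR_add_right scaleR_diff_right algebra_simps)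
    finally show ?thesis .
  qed
  have "(\<Sum>j<k. gon_vertex h k s (int j)) = (\<Sum>j<k. F j) + (\<Sum>j<k. F (Suc j)) + (cos \<alpha> / sin \<alpha>) *\<^sub>R (\<Sum>j<k. G (Suc j) - G j)"
    unfolding vert2 by (simp add: sum.distrib scaleR_sum_right)
  also have "\<dots> = 2 *\<^sub>R (\<Sum>j<k. F (Suc j))"
    unfolding sum_lessThan_telescope Gk shift_sum[of F, OF Fk] by (simp add: scaleR_2)
  finally have S: "(\<Sum>j<k. gon_vertex h k s (int j)) = 2 *\<^sub>R (\<Sum>j<k. F (Suc j))" .
  have R: "(\<Sum>j=1..k. h (s + 2 * pi * real j / real k) *\<^sub>R uvec (s + 2 * pi * real j / real k)) = (\<Sum>j<k. F (Suc j))"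
    using sum.atLeast1_atMost_eq[of F k] by (simp add: F_def th_def)
  show ?thesis unfolding gon_center_def S R by simp
qed


lemma Omega_shift:
  fixes h :: "real \<Rightarrow> real" and k :: nat
  assumes per: "\<forall>s. h (s + 2 * pi) = h s" and k: "k > 2"
  defines "\<Omega> \<equiv> (\<lambda>s. (2 / real k) *\<^sub>R
      (\<Sum>j=1..k. h (s + 2 * pi * real j / real k) *\<^sub>R uvec (s + 2 * pi * real j / real k)))"
  shows "\<Omega> (s + 2 * pi / real k) = \<Omega> s"
proof -
  define F where "F t j = h (t + 2 * pi * real j / real k) *\<^sub>R uvec (t + 2 * pi * real j / real k)" for t j
  have O: "\<Omega> t = (2 / real k) *\<^sub>R (\<Sum>j<k. F t (Suc j))" for t
    unfolding \<Omega>_def using sum.atLeast1_atMost_eq[of "F t" k] by (simp add: F_def)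
  have FS: "F (s + 2 * pi / real k) j = F s (Suc j)" for j
  proof -
    have "s + 2 * pi / real k + 2 * pi * real j / real k = s + 2 * pi * real (Suc j) / real k"
      by (simp add: add_divide_distrib distrib_left)
    thus ?thesis by (simp only: F_def)
  qed
  have Fk: "F s (Suc k) = F s (Suc 0)"
  proof -
    have "s + 2 * pi * real (Suc k) / real k = (s + 2 * pi / real k) + 2 * pi"
      using k by (simp add: add_divide_distrib distrib_left)
    hence "F s (Suc k) = F (s + 2 * pi / real k) 0"
      using per[rule_format, of "s + 2 * pi / real k"] by (simp only: F_def uvec_def sin_periodic cos_periodic) simp
    thus ?thesis using FS by simp
  qed
  show ?thesis unfolding O FS
    using shift_sum[of "\<lambda>j. F s (Suc j)" k] Fk by simp
qed

theorem proposition4p5: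
  fixes h :: "real \<Rightarrow> real" and k :: nat
  assumes "is_support_function h" and "k > 2"
  defines "\<Omega> \<equiv> (\<lambda>s. (2 / real k) *\<^sub>R
      (\<Sum>j=1..k. h (s + 2 * pi * real j / real k) *\<^sub>R uvec (s + 2 * pi * real j / real k)))"
  shows "(\<forall>s. gon_center h k s = \<Omega> s) \<and> midpoint_set h k = \<Omega> ` {0 .. 2 * pi / real k}"
proof -
  have per: "\<forall>s. h (s + 2 * pi) = h s" using assms(1) by (simp add: is_support_function_def)
  have C: "\<forall>s. gon_center h k s = \<Omega> s"
    unfolding \<Omega>_def using center_formula[OF per assms(2)] by blast
  define \<alpha> where "\<alpha> = 2 * pi / real k"
  have ap: "\<alpha> > 0" using assms(2) by (simp add: \<alpha>_def)
  have sh: "\<Omega> (t + \<alpha>) = \<Omega> t" for t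
    unfolding \<alpha>_def \<Omega>_def using Omega_shift[OF per assms(2)] by simp
  have shn: "\<Omega> (t + real n * \<alpha>) = \<Omega> t" for t n
  proof (induction n)
    case 0 then show ?case by simp
  next
    case (Suc n)
    have eq: "t + real (Suc n) * \<alpha> = (t + real n * \<alpha>) + \<alpha>" by (simp add: algebra_simps)
    show ?case by (simp only: eq sh Suc.IH)
  qed
  have "range \<Omega> \<subseteq> \<Omega> ` {0 .. \<alpha>}"
  proof
    fix y assume "y \<in> range \<Omega>"
    then obtain s where y: "y = \<Omega> s" by auto
    define m where "m = \<lfloor>s / \<alpha>\<rfloor>"
    define s0 where "s0 = s - of_int m * \<alpha>"
    have "of_int m \<le> s / \<alpha>" "s / \<alpha> < of_int m + 1" unfolding m_def by linarith+
    hence "of_int m * \<alpha> \<le> s" "s < (of_int m + 1) * \<alpha>" using ap by (simp_all add: field_simps)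
    hence s0r: "s0 \<in> {0 .. \<alpha>}" unfolding s0_def by (simp add: algebra_simps)
    have "\<Omega> s = \<Omega> s0"
    proof (cases "m \<ge> 0")
      case True
      have "s = s0 + real (nat m) * \<alpha>" using True by (simp add: s0_def)
      then show ?thesis using shn by metis
    next
      case False
      have "s0 = s + real (nat (- m)) * \<alpha>" using False by (simp add: s0_def)
      then show ?thesis using shn by metis
    qed
    thus "y \<in> \<Omega> ` {0 .. \<alpha>}" using y s0r by blast
  qed
  hence "range \<Omega> = \<Omega> ` {0 .. \<alpha>}" by auto
  moreover have "midpoint_set h k = range \<Omega>" unfolding midpoint_set_def using C by auto
  ultimately show ?thesis using C by (simp add: \<alpha>_def)
qed

end
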